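(* Let $q$ be a prime power, let $\Gamma$ be a projective bundle in $\mathrm{PG}(2,q)$, let $A$ be the binary point-line incidence matrix of $\mathrm{PG}(2,q)$ and $B$ the binary point-oval incidence matrix of $\Gamma$ (rows indexed by points in the same order), and let $H=(A\mid B)$. Then the maximum column intersection of $H$ equals $2$. Consequently, one round of the bit-flipping decoding algorithm with respect to $H$ corrects every error of Hamming weight at most $\lfloor\frac{q+1}{4}\rfloor$ in the code $C=\ker(H)=\{c\in\mathbb{F}_2^{2(q^2+q+1)}: cH^\top=0\}$; that is, for every $c\in C$ and $e$ with $\mathrm{wt}(e)\le\lfloor\frac{q+1}{4}\rfloor$, one round applied to $c+e$ outputs $c$.
   Context: $\mathrm{PG}(2,q)$ is the projective plane whose points and lines are the 1- and 2-dimensional subspaces of $\mathbb{F}_q^3$. An oval is a set of $q+1$ points such that every line meets it in at most two points. A projective bundle is a collection of $q^2+q+1$ ovals of $\mathrm{PG}(2,q)$ any two of which intersect in exactly one point. Incidence matrices have entry $1$ iff the point (row) lies on the line/oval (column). The maximum column intersection of a binary matrix is the maximum, over pairs of distinct columns, of the number of rows in which both columns have a $1$. $H$ has constant column weight $v=q+1$. One round of the bit-flipping algorithm on input $y$ for a binary matrix $H$ of constant column weight $v$: compute $s=Hy^\top$; for each column $j$ let $u_j$ be the number of rows $i$ with $H_{ij}=1$ and $s_i=1$; output $y$ with the bits in positions $\{j: u_j>v/2\}$ flipped. *)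

theory Defs
  imports Main "HOL-Library.Cardinality"
begin

text \<open>Vectors of F_q^3, with F_q the finite field 'a (q = CARD('a)).\<close>
type_synonym 'a vec3 = "'a \<times> 'a \<times> 'a"

definition sc :: "'a::field \<Rightarrow> 'a vec3 \<Rightarrow> 'a vec3" where
  "sc c v = (case v of (x, y, z) \<Rightarrow> (c * x, c * y, c * z))"

definition ad :: "'a::field vec3 \<Rightarrow> 'a vec3 \<Rightarrow> 'a vec3" where
  "ad v w = (case v of (x, y, z) \<Rightarrow> (case w of (x', y', z') \<Rightarrow> (x + x', y + y', z + z')))"

definition pg_points :: "('a::field) vec3 set set" where
  "pg_points = {{sc c v | c. True} | v. v \<noteq> (0, 0, 0)}"

definition pg_lines :: "('a::field) vec3 set set" where
  "pg_lines = {{ad (sc a u) (sc b w) | a b. True} | u w.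
      \<forall>a b. ad (sc a u) (sc b w) = (0, 0, 0) \<longrightarrow> a = 0 \<and> b = 0}"

text \<open>A point P lies on a line L iff P is a subspace of L.\<close>
definition is_oval :: "('a::{finite,field}) vec3 set set \<Rightarrow> bool" where
  "is_oval Ov \<longleftrightarrow> Ov \<subseteq> pg_points \<and> card Ov = CARD('a) + 1 \<and>
     (\<forall>L\<in>pg_lines. card {P \<in> Ov. P \<subseteq> L} \<le> 2)"

definition projective_bundle :: "('a::{finite,field}) vec3 set set set \<Rightarrow> bool" where
  "projective_bundle G \<longleftrightarrow> (\<forall>Ov\<in>G. is_oval Ov) \<and>
     card G = CARD('a)^2 + CARD('a) + 1 \<and>
     (\<forall>O1\<in>G. \<forall>O2\<in>G. O1 \<noteq> O2 \<longrightarrow> card (O1 \<inter> O2) = 1)"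

text \<open>Columns of H = (A | B): Inl L for lines, Inr O for ovals of the bundle.
  Entry of H at row P (a point) and column j.\<close>
definition H_entry :: "'a vec3 set \<Rightarrow> ('a vec3 set + 'a vec3 set set) \<Rightarrow> bool" where
  "H_entry P j = (case j of Inl L \<Rightarrow> P \<subseteq> L | Inr Ov \<Rightarrow> P \<in> Ov)"

definition H_cols :: "('a::field) vec3 set set set \<Rightarrow> ('a vec3 set + 'a vec3 set set) set" where
  "H_cols G = Inl ` pg_lines \<union> Inr ` G"

text \<open>Generic binary matrices: rows R, columns Cs, entries M i j (True = 1).
  Binary vectors indexed by Cs are represented by their supports (subsets of Cs).\<close>
definition max_col_intersection :: "'r set \<Rightarrow> 'c set \<Rightarrow> ('r \<Rightarrow> 'c \<Rightarrow> bool) \<Rightarrow> nat" where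
  "max_col_intersection R Cs M =
     Max {card {i \<in> R. M i j \<and> M i k} | j k. j \<in> Cs \<and> k \<in> Cs \<and> j \<noteq> k}"

definition syndrome :: "'c set \<Rightarrow> ('r \<Rightarrow> 'c \<Rightarrow> bool) \<Rightarrow> 'c set \<Rightarrow> 'r \<Rightarrow> bool" where
  "syndrome Cs M y i \<longleftrightarrow> odd (card {j \<in> Cs. M i j \<and> j \<in> y})"

definition in_kernel :: "'r set \<Rightarrow> 'c set \<Rightarrow> ('r \<Rightarrow> 'c \<Rightarrow> bool) \<Rightarrow> 'c set \<Rightarrow> bool" where
  "in_kernel R Cs M c \<longleftrightarrow> c \<subseteq> Cs \<and> (\<forall>i\<in>R. \<not> syndrome Cs M c i)"

definition sym_diff :: "'c set \<Rightarrow> 'c set \<Rightarrow> 'c set" where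
  "sym_diff A B = (A - B) \<union> (B - A)"

definition bf_round :: "'r set \<Rightarrow> 'c set \<Rightarrow> ('r \<Rightarrow> 'c \<Rightarrow> bool) \<Rightarrow> nat \<Rightarrow> 'c set \<Rightarrow> 'c set" where
  "bf_round R Cs M v y = sym_diff y
     {j \<in> Cs. 2 * card {i \<in> R. M i j \<and> syndrome Cs M y i} > v}"

end

theory Submission
  imports Defs
begin

definition spn :: "'a::field vec3 \<Rightarrow> 'a vec3 \<Rightarrow> 'a vec3 set" where
  "spn u w = {ad (sc a u) (sc b w) | a b. True}"
definition indep :: "'a::field vec3 \<Rightarrow> 'a vec3 \<Rightarrow> bool" where
  "indep u w = (\<forall>a b. ad (sc a u) (sc b w) = (0, 0, 0) \<longrightarrow> a = 0 \<and> b = 0)"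
definition pt :: "'a::field vec3 \<Rightarrow> 'a vec3 set" where
  "pt v = {sc c v | c. True}"

lemma sc3[simp]: "sc c (x, y, z) = (c * x, c * y, c * z)" by (simp add: sc_def)
lemma ad3[simp]: "ad (x, y, z) (x', y', z') = (x + x', y + y', z + z')" by (simp add: ad_def)

lemma pg_points_alt: "pg_points = {pt v | v. v \<noteq> (0,0,0)}"
  by (simp add: pg_points_def pt_def)
lemma pg_lines_alt: "pg_lines = {spn u w | u w. indep u w}"
  by (simp add: pg_lines_def spn_def indep_def)

lemma mem_pt_self: "v \<in> pt v"
  unfolding pt_def by (rule CollectI, rule exI[of _ 1], cases v, auto)

lemma spn_closed:
  assumes "x \<in> spn u w" "y \<in> spn u w"
  shows "ad (sc c x) (sc d y) \<in> spn u w"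
proof -
  obtain a1 b1 where x: "x = ad (sc a1 u) (sc b1 w)" using assms(1) by (auto simp: spn_def)
  obtain a2 b2 where y: "y = ad (sc a2 u) (sc b2 w)" using assms(2) by (auto simp: spn_def)
  obtain u1 u2 u3 where u: "u = (u1,u2,u3)" by (cases u) auto
  obtain w1 w2 w3 where w: "w = (w1,w2,w3)" by (cases w) auto
  show ?thesis unfolding spn_def
    by (rule CollectI, rule exI[of _ "c*a1+d*a2"], rule exI[of _ "c*b1+d*b2"])
       (simp add: x y u w algebra_simps)
qed

lemma u_in_spn: "u \<in> spn u w"
  unfolding spn_def by (rule CollectI, rule exI[of _ 1], rule exI[of _ 0], cases u, cases w, auto)
lemma w_in_spn: "w \<in> spn u w"
  unfolding spn_def by (rule CollectI, rule exI[of _ 0], rule exI[of _ 1], cases u, cases w, auto)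

lemma pt_sub_spn: assumes "v \<in> spn u w" shows "pt v \<subseteq> spn u w"
proof
  fix z assume "z \<in> pt v"
  then obtain c where z: "z = sc c v" by (auto simp: pt_def)
  have "ad (sc c v) (sc 0 v) \<in> spn u w" by (rule spn_closed[OF assms assms])
  moreover have "ad (sc c v) (sc 0 v) = sc c v" by (cases v) auto
  ultimately show "z \<in> spn u w" using z by simp
qed

lemma spn_sub: assumes "x \<in> spn u w" "y \<in> spn u w" shows "spn x y \<subseteq> spn u w"
  using spn_closed[OF assms] by (auto simp: spn_def)

lemma sc_zero_imp:
  assumes "sc b y = (0,0,0)" "y \<noteq> (0,0,0)" shows "b = 0"
  using assms by (cases y) auto

lemma mem_pt_eq:
  assumes "x \<noteq> (0,0,0)" "x \<in> pt y" shows "pt x = pt y"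
proof -
  obtain k where k: "x = sc k y" using assms(2) by (auto simp: pt_def)
  obtain y1 y2 y3 where y: "y = (y1,y2,y3)" by (cases y) auto
  have k0: "k \<noteq> 0" using assms(1) k y by auto
  show ?thesis
  proof
    show "pt x \<subseteq> pt y"
    proof
      fix z assume "z \<in> pt x"
      then obtain c where "z = sc c x" by (auto simp: pt_def)
      then have "z = sc (c*k) y" using k y by simp
      then show "z \<in> pt y" by (auto simp: pt_def)
    qed
    show "pt y \<subseteq> pt x"
    proof
      fix z assume "z \<in> pt y"
      then obtain c where "z = sc c y" by (auto simp: pt_def)
      then have "z = sc (c/k) x" using k y k0 by simp
      then show "z \<in> pt x" by (auto simp: pt_def)
    qed
  qed
qed

lemma distinct_pts_indep:
  assumes "x \<noteq> (0,0,0)" "y \<noteq> (0,0,0)" "pt x \<noteq> pt y" shows "indep x y"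
  unfolding indep_def
proof (intro allI impI)
  fix a b assume h: "ad (sc a x) (sc b y) = (0,0,0)"
  obtain x1 x2 x3 where x: "x = (x1,x2,x3)" by (cases x) auto
  obtain y1 y2 y3 where y: "y = (y1,y2,y3)" by (cases y) auto
  show "a = 0 \<and> b = 0"
  proof (cases "a = 0")
    case True
    then have "sc b y = (0,0,0)" using h x y by simp
    then show ?thesis using True sc_zero_imp assms(2) by blast
  next
    case False
    have "x = sc (-b/a) y" using h x y False by (simp add: field_simps add_eq_0_iff)
    then have "x \<in> pt y" by (auto simp: pt_def)
    then have "pt x = pt y" using mem_pt_eq assms(1) by blast
    then show ?thesis using assms(3) by blast
  qed
qed


lemma indep_nz: "indep x y \<Longrightarrow> x \<noteq> (0,0,0)"
proof
  assume "indep x y" "x = (0,0,0)"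
  then have "ad (sc 1 x) (sc 0 y) = (0,0,0)" by (cases y) simp
  then have "(1::'a) = 0" using \<open>indep x y\<close> unfolding indep_def by blast
  then show False by simp
qed


lemma cramer:
  assumes iuw: "indep u w" and xs: "x \<in> spn u w" and ys: "y \<in> spn u w" and ixy: "indep x y"
  shows "u \<in> spn x y \<and> w \<in> spn x y"
proof -
  obtain a1 b1 where x: "x = ad (sc a1 u) (sc b1 w)" using xs by (auto simp: spn_def)
  obtain a2 b2 where y: "y = ad (sc a2 u) (sc b2 w)" using ys by (auto simp: spn_def)
  obtain u1 u2 u3 where u: "u = (u1,u2,u3)" by (cases u) auto
  obtain w1 w2 w3 where w: "w = (w1,w2,w3)" by (cases w) auto
  define D where "D = a1 * b2 - a2 * b1"
  have D: "D \<noteq> 0"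
  proof
    assume D0: "D = 0"
    have "ad (sc b2 x) (sc (-b1) y) = ad (sc D u) (sc 0 w)"
      using x y u w by (simp add: D_def algebra_simps)
    also have "\<dots> = (0,0,0)" using D0 u w by simp
    finally have "b2 = 0 \<and> - b1 = 0" using ixy unfolding indep_def by blast
    then have b: "b1 = 0" "b2 = 0" by auto
    have "ad (sc a2 x) (sc (-a1) y) = (0,0,0)"
      using x y u w b by (simp add: algebra_simps)
    then have "a2 = 0 \<and> - a1 = 0" using ixy unfolding indep_def by blast
    then have "x = (0,0,0)" using x b u w by simp
    then show False using indep_nz[OF ixy] by simp
  qed
  have e: "s/D*X + t/D*Y = (s*X + t*Y)/D" for s t X Y by (simp add: add_divide_distrib)
  have c1: "b2/D*(a1*p+b1*q) + (-b1)/D*(a2*p+b2*q) = p" for p q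
  proof -
    have "b2*(a1*p+b1*q) + (-b1)*(a2*p+b2*q) = D*p" by (simp add: D_def algebra_simps)
    then show ?thesis using D by (simp only: e) simp
  qed
  have c2: "(-a2)/D*(a1*p+b1*q) + a1/D*(a2*p+b2*q) = q" for p q
  proof -
    have "(-a2)*(a1*p+b1*q) + a1*(a2*p+b2*q) = D*q" by (simp add: D_def algebra_simps)
    then show ?thesis using D by (simp only: e) simp
  qed
  have U: "u = ad (sc (b2/D) x) (sc ((-b1)/D) y)"
  proof -
  have "u = (b2/D*(a1*u1+b1*w1) + (-b1)/D*(a2*u1+b2*w1), b2/D*(a1*u2+b1*w2) + (-b1)/D*(a2*u2+b2*w2),
     b2/D*(a1*u3+b1*w3) + (-b1)/D*(a2*u3+b2*w3))" by (simp only: c1 u)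
  also have "\<dots> = ad (sc (b2/D) x) (sc ((-b1)/D) y)" by (simp only: x y u w sc3 ad3)
  finally show ?thesis .
  qed
  have W: "w = ad (sc ((-a2)/D) x) (sc (a1/D) y)"
  proof -
  have "w = ((-a2)/D*(a1*u1+b1*w1) + a1/D*(a2*u1+b2*w1), (-a2)/D*(a1*u2+b1*w2) + a1/D*(a2*u2+b2*w2),
     (-a2)/D*(a1*u3+b1*w3) + a1/D*(a2*u3+b2*w3))" by (simp only: c2 w)
  also have "\<dots> = ad (sc ((-a2)/D) x) (sc (a1/D) y)" by (simp only: x y u w sc3 ad3)
  finally show ?thesis .
  qed
  from U W show ?thesis unfolding spn_def by blast
qed

lemma line_det:
  assumes "indep u w" "x \<in> spn u w" "y \<in> spn u w" "indep x y"
  shows "spn u w = spn x y"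
proof
  show "spn x y \<subseteq> spn u w" using spn_sub assms(2,3) .
  show "spn u w \<subseteq> spn x y" using spn_sub cramer[OF assms] by blast
qed

lemma lines_meet:
  fixes L1 L2 :: "'a::{finite,field} vec3 set"
  assumes L1: "L1 \<in> pg_lines" and L2: "L2 \<in> pg_lines" and ne: "L1 \<noteq> L2"
  shows "card {P \<in> pg_points. P \<subseteq> L1 \<and> P \<subseteq> L2} \<le> 1"
proof -
  have "\<forall>P\<in>{P \<in> pg_points. P \<subseteq> L1 \<and> P \<subseteq> L2}. \<forall>Q\<in>{P \<in> pg_points. P \<subseteq> L1 \<and> P \<subseteq> L2}. P = Q"
  proof (intro ballI, rule ccontr)
    fix P Q assume P: "P \<in> {P \<in> pg_points. P \<subseteq> L1 \<and> P \<subseteq> L2}"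
      and Q: "Q \<in> {P \<in> pg_points. P \<subseteq> L1 \<and> P \<subseteq> L2}" and PQ: "P \<noteq> Q"
    obtain x where x: "P = pt x" "x \<noteq> (0,0,0)" using P by (auto simp: pg_points_alt)
    obtain y where y: "Q = pt y" "y \<noteq> (0,0,0)" using Q by (auto simp: pg_points_alt)
    have ixy: "indep x y" using distinct_pts_indep x y PQ by blast
    obtain u1 w1 where l1: "L1 = spn u1 w1" "indep u1 w1" using L1 by (auto simp: pg_lines_alt)
    obtain u2 w2 where l2: "L2 = spn u2 w2" "indep u2 w2" using L2 by (auto simp: pg_lines_alt)
    have "x \<in> L1" "y \<in> L1" "x \<in> L2" "y \<in> L2" using P Q x y mem_pt_self by blast+
    then have "L1 = spn x y" "L2 = spn x y" using line_det l1 l2 ixy by metis+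
    then show False using ne by simp
  qed
  moreover have "finite {P \<in> pg_points. P \<subseteq> L1 \<and> P \<subseteq> L2}" by simp
  ultimately show ?thesis unfolding One_nat_def by (rule card_le_Suc0_iff_eq[THEN iffD2, rotated])
qed

lemma line_weight:
  assumes L: "L \<in> pg_lines"
  shows "CARD('a::{finite,field}) + 1 \<le> card {P \<in> pg_points. P \<subseteq> (L :: 'a vec3 set)}"
proof -
  obtain u w where l: "L = spn u w" and iuw: "indep u w" using L by (auto simp: pg_lines_alt)
  obtain u1 u2 u3 where u: "u = (u1,u2,u3)" by (cases u) auto
  obtain w1 w2 w3 where w: "w = (w1,w2,w3)" by (cases w) auto
  define f where "f t = pt (ad w (sc t u))" for t :: 'a
  have nz: "ad w (sc t u) \<noteq> (0,0,0)" for t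
  proof
    assume "ad w (sc t u) = (0,0,0)"
    then have "ad (sc t u) (sc 1 w) = (0,0,0)" using u w by (simp add: add.commute)
    then have "(1::'a) = 0" using iuw unfolding indep_def by blast
    then show False by simp
  qed
  have inj: "inj f"
  proof
    fix s t assume "f s = f t"
    then have "ad w (sc s u) \<in> pt (ad w (sc t u))" using mem_pt_self f_def by metis
    then obtain k where "ad w (sc s u) = sc k (ad w (sc t u))" by (auto simp: pt_def)
    then have "ad (sc (s - k*t) u) (sc (1 - k) w) = (0,0,0)" using u w
      by (simp add: algebra_simps)
    then have "s - k*t = 0 \<and> 1 - k = 0" using iuw unfolding indep_def by blast
    then show "s = t" by simp
  qed
  have notin: "pt u \<notin> range f"
  proof
    assume "pt u \<in> range f"
    then obtain t where "pt u = f t" by auto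
    then have "ad w (sc t u) \<in> pt u" using mem_pt_self f_def by metis
    then obtain k where "ad w (sc t u) = sc k u" by (auto simp: pt_def)
    then have "ad (sc (t - k) u) (sc 1 w) = (0,0,0)" using u w
      by (simp add: algebra_simps)
    then have "(1::'a) = 0" using iuw unfolding indep_def by blast
    then show False by simp
  qed
  have sub: "insert (pt u) (range f) \<subseteq> {P \<in> pg_points. P \<subseteq> L}"
  proof -
    have "pt u \<in> pg_points" using indep_nz[OF iuw] unfolding pg_points_alt by blast
    moreover have "pt u \<subseteq> L" using pt_sub_spn u_in_spn l by blast
    moreover have "f t \<in> pg_points" for t using nz unfolding pg_points_alt f_def by blast
    moreover have "f t \<subseteq> L" for t
    proof -
      have "ad (sc t u) (sc 1 w) = ad w (sc t u)" using u w by (simp add: add.commute)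
      then have "ad w (sc t u) \<in> spn u w" unfolding spn_def by (metis (mono_tags, lifting) CollectI)
      then show ?thesis unfolding f_def l by (rule pt_sub_spn)
    qed
    ultimately show ?thesis by auto
  qed
  have cr: "card (range f) = CARD('a)" using card_image[OF inj] .
  have "card (insert (pt u) (range f)) = Suc (card (range f))"
    by (rule card_insert_disjoint[OF _ notin]) simp
  then have ce: "card (insert (pt u) (range f)) = CARD('a) + 1" using cr by simp
  have fin: "finite {P \<in> pg_points. P \<subseteq> L}" by simp
  show ?thesis using card_mono[OF fin sub] ce by linarith
qed


lemma symdiff_card:
  assumes "finite A" "finite B"
  shows "card (sym_diff A B) + 2 * card (A \<inter> B) = card A + card B"
proof -
  have "card ((A - B) \<union> (A \<inter> B)) = card (A - B) + card (A \<inter> B)"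
    by (rule card_Un_disjoint) (use assms in auto)
  moreover have "(A - B) \<union> (A \<inter> B) = A" by auto
  moreover have "card ((B - A) \<union> (A \<inter> B)) = card (B - A) + card (A \<inter> B)"
    by (rule card_Un_disjoint) (use assms in auto)
  moreover have "(B - A) \<union> (A \<inter> B) = B" by auto
  moreover have "card (sym_diff A B) = card (A - B) + card (B - A)"
    unfolding sym_diff_def using assms by (intro card_Un_disjoint) auto
  ultimately show ?thesis by simp
qed

lemma par_aux: "(n::nat) + 2 * m = a + b \<Longrightarrow> odd n = (odd a \<noteq> odd b)" by presburger

lemma synd_sym:
  assumes "finite Cs"
  shows "syndrome Cs M (sym_diff c e) i \<longleftrightarrow> (syndrome Cs M c i \<noteq> syndrome Cs M e i)"
proof -
  let ?A = "{j \<in> Cs. M i j \<and> j \<in> c}" and ?B = "{j \<in> Cs. M i j \<and> j \<in> e}"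
  have "{j \<in> Cs. M i j \<and> j \<in> sym_diff c e} = sym_diff ?A ?B"
    by (auto simp: sym_diff_def)
  moreover have "card (sym_diff ?A ?B) + 2 * card (?A \<inter> ?B) = card ?A + card ?B"
    using assms by (intro symdiff_card) auto
  ultimately have "card {j \<in> Cs. M i j \<and> j \<in> sym_diff c e} + 2 * card (?A \<inter> ?B) = card ?A + card ?B"
    by simp
  then show ?thesis unfolding syndrome_def by (rule par_aux)
qed

lemma decode:
  fixes R :: "'r set" and Cs :: "'c set"
  assumes fR: "finite R" and fC: "finite Cs"
    and wt: "\<forall>j\<in>Cs. v \<le> card {i \<in> R. M i j}"
    and ov: "\<forall>j\<in>Cs. \<forall>k\<in>Cs. j \<noteq> k \<longrightarrow> card {i \<in> R. M i j \<and> M i k} \<le> 2"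
    and ker: "in_kernel R Cs M c" and eC: "e \<subseteq> Cs" and small: "4 * card e \<le> v"
  shows "bf_round R Cs M v (sym_diff c e) = c"
proof -
  let ?y = "sym_diff c e"
  have fe: "finite e" using eC fC finite_subset by blast
  have sy: "syndrome Cs M ?y i \<longleftrightarrow> odd (card {k \<in> Cs. M i k \<and> k \<in> e})" if "i \<in> R" for i
    using synd_sym[OF fC, of M c e i] ker that unfolding in_kernel_def syndrome_def by blast
  define U where "U j = {i \<in> R. M i j \<and> syndrome Cs M ?y i}" for j
  have fU: "finite (U j)" for j using fR unfolding U_def by simp
  have out: "2 * card (U j) \<le> v" if j: "j \<in> Cs" "j \<notin> e" for j
  proof -
    have "U j \<subseteq> (\<Union>k\<in>e. {i \<in> R. M i j \<and> M i k})"
    proof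
      fix i assume i: "i \<in> U j"
      then have "odd (card {k \<in> Cs. M i k \<and> k \<in> e})" using sy unfolding U_def by blast
      then have "{k \<in> Cs. M i k \<and> k \<in> e} \<noteq> {}" by (intro notI) simp
      then obtain k where "k \<in> e" "M i k" by blast
      then show "i \<in> (\<Union>k\<in>e. {i \<in> R. M i j \<and> M i k})" using i unfolding U_def by blast
    qed
    then have "card (U j) \<le> card (\<Union>k\<in>e. {i \<in> R. M i j \<and> M i k})"
      by (rule card_mono[rotated]) (rule finite_subset[OF _ fR], blast)
    also have "\<dots> \<le> (\<Sum>k\<in>e. card {i \<in> R. M i j \<and> M i k})" by (rule card_UN_le[OF fe])
    also have "\<dots> \<le> (\<Sum>k\<in>e. 2)" proof (rule sum_mono)
      fix k assume "k \<in> e"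
      then have "k \<in> Cs" "j \<noteq> k" using eC j by auto
      then show "card {i \<in> R. M i j \<and> M i k} \<le> 2" using ov j(1) by simp
    qed
    finally show ?thesis using small by simp
  qed
  have inn: "v < 2 * card (U j)" if j: "j \<in> e" for j
  proof -
    have jC: "j \<in> Cs" using j eC by blast
    have "{i \<in> R. M i j} \<subseteq> U j \<union> (\<Union>k\<in>e - {j}. {i \<in> R. M i j \<and> M i k})"
    proof
      fix i assume i: "i \<in> {i \<in> R. M i j}"
      show "i \<in> U j \<union> (\<Union>k\<in>e - {j}. {i \<in> R. M i j \<and> M i k})"
      proof (cases "syndrome Cs M ?y i")
        case True then show ?thesis using i unfolding U_def by blast
      next
        case False
        then have ev: "even (card {k \<in> Cs. M i k \<and> k \<in> e})" using sy i by blast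
        have "\<exists>k\<in>{k \<in> Cs. M i k \<and> k \<in> e}. k \<noteq> j"
        proof (rule ccontr)
          assume "\<not> ?thesis"
          then have "{k \<in> Cs. M i k \<and> k \<in> e} = {j}" using i j jC by blast
          then show False using ev by simp
        qed
        then show ?thesis using i by blast
      qed
    qed
    then have a1: "card {i \<in> R. M i j} \<le> card (U j \<union> (\<Union>k\<in>e - {j}. {i \<in> R. M i j \<and> M i k}))"
      by (rule card_mono[rotated]) (rule finite_subset[OF _ fR], unfold U_def, blast)
    have a2: "card (U j \<union> (\<Union>k\<in>e - {j}. {i \<in> R. M i j \<and> M i k})) \<le> card (U j) + card (\<Union>k\<in>e - {j}. {i \<in> R. M i j \<and> M i k})"
      by (rule card_Un_le)
    have "card (\<Union>k\<in>e - {j}. {i \<in> R. M i j \<and> M i k}) \<le> (\<Sum>k\<in>e - {j}. card {i \<in> R. M i j \<and> M i k})"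
      by (rule card_UN_le) (use fe in simp)
    also have "\<dots> \<le> (\<Sum>k\<in>e - {j}. 2)" proof (rule sum_mono)
      fix k assume "k \<in> e - {j}"
      then have "k \<in> Cs" "j \<noteq> k" using eC by auto
      then show "card {i \<in> R. M i j \<and> M i k} \<le> 2" using ov jC by simp
    qed
    also have "\<dots> = 2 * (card e - 1)" using fe j by simp
    finally have a3: "card (\<Union>k\<in>e - {j}. {i \<in> R. M i j \<and> M i k}) \<le> 2 * (card e - 1)" .
    have "card {i \<in> R. M i j} \<le> card (U j) + 2 * (card e - 1)" using a1 a2 a3 by linarith
    moreover have "v \<le> card {i \<in> R. M i j}" using wt jC by blast
    moreover have "card e > 0" using fe j card_gt_0_iff by blast
    ultimately show ?thesis using small by linarith
  qed
  have F: "{j \<in> Cs. 2 * card {i \<in> R. M i j \<and> syndrome Cs M ?y i} > v} = e"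
  proof -
    have "j \<in> e" if "j \<in> Cs" "2 * card (U j) > v" for j using out[of j] that by linarith
    moreover have "2 * card (U j) > v" if "j \<in> e" for j using inn that by blast
    ultimately show ?thesis using eC unfolding U_def by blast
  qed
  show ?thesis unfolding bf_round_def F by (auto simp: sym_diff_def)
qed


lemma pair_bound:
  fixes G :: "('a::{finite,field}) vec3 set set set"
  assumes pb: "projective_bundle G" and j: "j \<in> H_cols G" and k: "k \<in> H_cols G" and jk: "j \<noteq> k"
  shows "card {i \<in> pg_points. H_entry i j \<and> H_entry i k} \<le> 2"
proof -
  have ovals: "\<And>Ov. Ov \<in> G \<Longrightarrow> is_oval Ov" and pw: "\<And>O1 O2. O1 \<in> G \<Longrightarrow> O2 \<in> G \<Longrightarrow> O1 \<noteq> O2 \<Longrightarrow> card (O1 \<inter> O2) = 1"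
    using pb unfolding projective_bundle_def by blast+
  have lo: "card {i \<in> pg_points. i \<subseteq> L \<and> i \<in> Ov} \<le> 2" if "L \<in> pg_lines" "Ov \<in> G" for L Ov
  proof -
    have "{i \<in> pg_points. i \<subseteq> L \<and> i \<in> Ov} = {P \<in> Ov. P \<subseteq> L}"
      using ovals[OF that(2)] unfolding is_oval_def by blast
    then show ?thesis using ovals[OF that(2)] that(1) unfolding is_oval_def by simp
  qed
  show ?thesis
  proof (cases j)
    case (Inl L1)
    then have L1: "L1 \<in> pg_lines" using j unfolding H_cols_def by auto
    show ?thesis
    proof (cases k)
      case (Inl L2)
      then have L2: "L2 \<in> pg_lines" using k unfolding H_cols_def by auto
      have "card {i \<in> pg_points. i \<subseteq> L1 \<and> i \<subseteq> L2} \<le> 1"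
        using lines_meet[OF L1 L2] jk Inl \<open>j = Inl L1\<close> by blast
      then show ?thesis using Inl \<open>j = Inl L1\<close> by (simp add: H_entry_def)
    next
      case (Inr Ov)
      then have "Ov \<in> G" using k unfolding H_cols_def by auto
      then show ?thesis using lo[OF L1] Inr \<open>j = Inl L1\<close> by (simp add: H_entry_def)
    qed
  next
    case (Inr O1)
    then have O1: "O1 \<in> G" using j unfolding H_cols_def by auto
    show ?thesis
    proof (cases k)
      case (Inl L)
      then have "L \<in> pg_lines" using k unfolding H_cols_def by auto
      then have "card {i \<in> pg_points. i \<subseteq> L \<and> i \<in> O1} \<le> 2" using lo O1 by blast
      moreover have "{i \<in> pg_points. i \<subseteq> L \<and> i \<in> O1} = {i \<in> pg_points. H_entry i j \<and> H_entry i k}"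
        using Inl \<open>j = Inr O1\<close> by (auto simp: H_entry_def)
      ultimately show ?thesis by simp
    next
      case (Inr O2)
      then have O2: "O2 \<in> G" using k unfolding H_cols_def by auto
      have "O1 \<noteq> O2" using jk Inr \<open>j = Inr O1\<close> by blast
      then have "card (O1 \<inter> O2) = 1" using pw O1 O2 by blast
      moreover have "{i \<in> pg_points. H_entry i j \<and> H_entry i k} = O1 \<inter> O2"
        using Inr \<open>j = Inr O1\<close> ovals[OF O1] unfolding is_oval_def by (auto simp: H_entry_def)
      ultimately show ?thesis by simp
    qed
  qed
qed

lemma col_weight:
  fixes G :: "('a::{finite,field}) vec3 set set set"
  assumes pb: "projective_bundle G" and j: "j \<in> H_cols G"
  shows "CARD('a) + 1 \<le> card {i \<in> pg_points. H_entry i j}"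
proof (cases j)
  case (Inl L)
  then have "L \<in> pg_lines" using j unfolding H_cols_def by auto
  then show ?thesis using line_weight Inl by (simp add: H_entry_def)
next
  case (Inr Ov)
  then have "Ov \<in> G" using j unfolding H_cols_def by auto
  then have "is_oval Ov" using pb unfolding projective_bundle_def by blast
  moreover have "{i \<in> pg_points. H_entry i j} = Ov" using Inr \<open>is_oval Ov\<close>
    unfolding is_oval_def by (auto simp: H_entry_def)
  ultimately show ?thesis unfolding is_oval_def by simp
qed

lemma exists_two:
  fixes G :: "('a::{finite,field}) vec3 set set set"
  assumes pb: "projective_bundle G"
  shows "\<exists>j k. j \<in> H_cols G \<and> k \<in> H_cols G \<and> j \<noteq> k \<and> card {i \<in> pg_points. H_entry i j \<and> H_entry i k} = 2"
proof -
  have "card G \<noteq> 0" using pb unfolding projective_bundle_def by simp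
  then have "G \<noteq> {}" by (intro notI) simp
  then obtain Ov where Ov: "Ov \<in> G" by blast
  then have ov: "is_oval Ov" using pb unfolding projective_bundle_def by blast
  have "CARD('a) \<ge> 1" by (simp add: Suc_leI)
  then have cO: "card Ov \<ge> 2" using ov unfolding is_oval_def by simp
  have "\<not> (\<forall>P\<in>Ov. \<forall>Q\<in>Ov. P = Q)"
  proof
    assume "\<forall>P\<in>Ov. \<forall>Q\<in>Ov. P = Q"
    then have "card Ov \<le> Suc 0" using card_le_Suc0_iff_eq[of Ov] by simp
    then show False using cO by simp
  qed
  then obtain P Q where PQ: "P \<in> Ov" "Q \<in> Ov" "P \<noteq> Q" by blast
  have "Ov \<subseteq> pg_points" using ov unfolding is_oval_def by blast
  then obtain x y where x: "P = pt x" "x \<noteq> (0,0,0)" and y: "Q = pt y" "y \<noteq> (0,0,0)"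
    using PQ unfolding pg_points_alt by blast
  have ixy: "indep x y" using distinct_pts_indep x y PQ by blast
  define L where "L = spn x y"
  have L: "L \<in> pg_lines" unfolding pg_lines_alt L_def using ixy by blast
  have "P \<subseteq> L" "Q \<subseteq> L" unfolding L_def x y using pt_sub_spn u_in_spn w_in_spn by blast+
  then have "{P, Q} \<subseteq> {R \<in> Ov. R \<subseteq> L}" using PQ by blast
  then have "2 \<le> card {R \<in> Ov. R \<subseteq> L}" using card_mono[of "{R \<in> Ov. R \<subseteq> L}" "{P,Q}"] PQ(3) by simp
  moreover have "card {R \<in> Ov. R \<subseteq> L} \<le> 2" using ov L unfolding is_oval_def by blast
  moreover have "{R \<in> Ov. R \<subseteq> L} = {i \<in> pg_points. H_entry i (Inl L) \<and> H_entry i (Inr Ov)}"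
    using \<open>Ov \<subseteq> pg_points\<close> by (auto simp: H_entry_def)
  moreover have "Inl L \<in> H_cols G" "Inr Ov \<in> H_cols G" using L Ov unfolding H_cols_def by auto
  ultimately have "card {i \<in> pg_points. H_entry i (Inl L) \<and> H_entry i (Inr Ov)} = 2"
    by simp
  moreover have "(Inl L :: ('a vec3 set + 'a vec3 set set)) \<noteq> Inr Ov" by simp
  ultimately show ?thesis using \<open>Inl L \<in> H_cols G\<close> \<open>Inr Ov \<in> H_cols G\<close> by blast
qed

theorem proposition4p14:
  fixes G :: "('a::{finite,field}) vec3 set set set"
  assumes "projective_bundle G"
  shows "max_col_intersection pg_points (H_cols G) H_entry = 2 \<and>
    (\<forall>c e. in_kernel pg_points (H_cols G) H_entry c \<longrightarrow> e \<subseteq> H_cols G \<longrightarrow>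
       card e \<le> (CARD('a) + 1) div 4 \<longrightarrow>
       bf_round pg_points (H_cols G) H_entry (CARD('a) + 1) (sym_diff c e) = c)"
proof
  let ?S = "{card {i \<in> pg_points. H_entry i j \<and> H_entry i k} | j k. j \<in> H_cols G \<and> k \<in> H_cols G \<and> j \<noteq> k}"
  have le: "\<forall>s\<in>?S. s \<le> 2" using pair_bound[OF assms] by blast
  obtain j k where jk: "j \<in> H_cols G" "k \<in> H_cols G" "j \<noteq> k"
    "card {i \<in> pg_points. H_entry i j \<and> H_entry i k} = 2" using exists_two[OF assms] by blast
  have in2: "2 \<in> ?S" using jk by force
  have fin: "finite ?S" by (rule finite_subset[of _ "{..2}"]) (use le in auto)
  show "max_col_intersection pg_points (H_cols G) H_entry = 2"
    unfolding max_col_intersection_def by (rule Max_eqI[OF fin]) (use le in2 in auto)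
next
  show "\<forall>c e. in_kernel pg_points (H_cols G) H_entry c \<longrightarrow> e \<subseteq> H_cols G \<longrightarrow>
       card e \<le> (CARD('a) + 1) div 4 \<longrightarrow>
       bf_round pg_points (H_cols G) H_entry (CARD('a) + 1) (sym_diff c e) = c"
  proof (intro allI impI)
    fix c e
    assume k: "in_kernel pg_points (H_cols G) H_entry c" and e: "e \<subseteq> H_cols G"
      and s: "card e \<le> (CARD('a) + 1) div 4"
    show "bf_round pg_points (H_cols G) H_entry (CARD('a) + 1) (sym_diff c e) = c"
    proof (rule decode)
      show "finite (pg_points :: 'a vec3 set set)" by simp
      show "finite (H_cols G)" by simp
      show "\<forall>j\<in>H_cols G. CARD('a) + 1 \<le> card {i \<in> pg_points. H_entry i j}"
        using col_weight[OF assms] by blast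
      show "\<forall>j\<in>H_cols G. \<forall>k\<in>H_cols G. j \<noteq> k \<longrightarrow> card {i \<in> pg_points. H_entry i j \<and> H_entry i k} \<le> 2"
        using pair_bound[OF assms] by blast
      show "4 * card e \<le> CARD('a) + 1" using s by linarith
    qed (use k e in auto)
  qed
qed

end
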